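(* Let $c_1>0$, $c_3>0$, $r_2>0$, $r_4>0$, $\tau>0$, $a_1=2\pi c_3\frac{2c_1}{c_1+c_3}$, $a_2=2\pi c_3\frac{c_1-c_3}{c_1+c_3}$, and \[ A=\begin{pmatrix}-a_1r_2&0\\0&-(a_1-a_2)r_4\end{pmatrix},\quad B=\begin{pmatrix}0&-a_1r_4\\-a_1r_2&0\end{pmatrix},\quad C=\begin{pmatrix}0&0\\0&-a_2r_4\end{pmatrix}, \] $\Delta(s)=sI-A-Be^{-\tau s}-Ce^{-2\tau s}$. Let $M$ be the residue of $s\mapsto\Delta^{-1}(s)$ at $s=0$ (i.e. $M=\lim_{s\to0}s\Delta^{-1}(s)$). Suppose $h:[0,\infty)\to\mathbb{R}^2$ is continuous and exponentially bounded, i.e. $\|h(t)\|\le K_1e^{-\beta t}$ for all $t\ge0$ with constants $K_1>0$, $\beta>0$, and let $\phi\in C([-2\tau,0],\mathbb{R}^2)$. Let $x$ be the solution of \[ \dot x(t)=Ax(t)+Bx(t-\tau)+Cx(t-2\tau)+h(t),\quad t\ge0,\qquad x(\theta)=\phi(\theta),\ \theta\in[-2\tau,0]. \] Then \[ \lim_{t\to\infty}x(t)=M\Big[\phi(0)+B\int_0^\tau\phi(\theta-\tau)\,d\theta+C\int_0^{2\tau}\phi(\theta-2\tau)\,d\theta+\int_0^\infty h(\theta)\,d\theta\Big]. \]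
   Context: In the physical model $c_i=\cos\theta_i/n_i$ with refractive indices $n_i>0$ and angles $\theta_i\in[0,\pi/2)$; the constant matrix $M$ satisfies $(A+B+C)M=0$. *)

theory Defs
  imports "HOL-Analysis.Analysis"
begin

definition cvec :: "real^2 \<Rightarrow> complex^2" where
  "cvec v = (\<chi> i. complex_of_real (v $ i))"

definition cmat :: "real^2^2 \<Rightarrow> complex^2^2" where
  "cmat M = (\<chi> i j. complex_of_real (M $ i $ j))"

definition char_matrix :: "real^2^2 \<Rightarrow> real^2^2 \<Rightarrow> real^2^2 \<Rightarrow> real \<Rightarrow> complex \<Rightarrow> complex^2^2" where
  "char_matrix A B C \<tau> s =
     (\<chi> i j. (if i = j then s else 0) - cmat A $ i $ j
              - exp (- (of_real \<tau>) * s) * cmat B $ i $ j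
              - exp (- 2 * (of_real \<tau>) * s) * cmat C $ i $ j)"

end

theory Submission
  imports Defs
begin

lemma deriv_integral_at:
  fixes f :: "real \<Rightarrow> real"
  assumes "continuous_on {a..} f" "a < t"
  shows "((\<lambda>s. integral {a..s} f) has_real_derivative f t) (at t)"
proof -
  have c: "continuous_on {a..t+1} f" using assms(1) by (rule continuous_on_subset) auto
  have d: "((\<lambda>s. integral {a..s} f) has_real_derivative f t) (at t within {a..t+1})"
    using integral_has_real_derivative[OF c] assms(2) by auto
  have "t \<in> interior {a..t+1}" using assms(2) by auto
  then have e: "at t within {a..t+1} = at t" by (rule at_within_interior)
  show ?thesis using d unfolding e .
qed

lemma tendsto_shift_at_top:
  fixes f :: "real \<Rightarrow> 'a::topological_space"
  assumes "(f \<longlongrightarrow> l) at_top"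
  shows "((\<lambda>t. f (t + c)) \<longlongrightarrow> l) at_top"
proof -
  have "filterlim (\<lambda>t::real. t + c) at_top at_top"
    using filterlim_tendsto_add_at_top[OF tendsto_const filterlim_ident, of c]
    by (simp add: add.commute)
  from filterlim_compose[OF assms this] show ?thesis by simp
qed

lemma diff_tendsto_zero:
  fixes f f' :: "real \<Rightarrow> real"
  assumes der: "\<And>t. t \<ge> a \<Longrightarrow> (f has_real_derivative f' t) (at t)"
    and lim: "(f' \<longlongrightarrow> 0) at_top" and c: "c \<ge> 0"
  shows "((\<lambda>t. f t - f (t - c)) \<longlongrightarrow> 0) at_top"
proof (rule tendstoI)
  fix e :: real assume e: "e > 0"
  have "e / (c + 1) > 0" using e c by simp
  from tendstoD[OF lim this] have "eventually (\<lambda>t. dist (f' t) 0 < e / (c + 1)) at_top" .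
  then obtain t0 where t0: "\<And>t. t \<ge> t0 \<Longrightarrow> \<bar>f' t\<bar> < e / (c + 1)"
    by (auto simp: eventually_at_top_linorder)
  have "\<forall>t\<ge>max t0 a + c. dist (f t - f (t - c)) 0 < e"
  proof (intro allI impI)
    fix t assume t: "t \<ge> max t0 a + c"
    show "dist (f t - f (t - c)) 0 < e"
    proof (cases "c = 0")
      case True then show ?thesis using e by simp
    next
      case False
      then have "t - c < t" using c by auto
      from MVT2[OF this, of f f'] der t
      obtain z where z: "t - c < z" "z < t" "f t - f (t - c) = (t - (t - c)) * f' z"
        by force
      have "\<bar>f' z\<bar> < e / (c + 1)" using t z by (intro t0) auto
      then have "c * \<bar>f' z\<bar> \<le> c * (e / (c + 1))"
        using c by (intro mult_left_mono) auto
      then have "\<bar>c * f' z\<bar> \<le> c * (e / (c + 1))"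
        using c by (simp add: abs_mult)
      also have "\<dots> < e" using c e by (simp add: field_simps)
      finally show ?thesis using z by (simp add: dist_real_def)
    qed
  qed
  then show "eventually (\<lambda>t. dist (f t - f (t - c)) 0 < e) at_top"
    by (auto simp: eventually_at_top_linorder)
qed

lemma int_approx_tendsto:
  fixes f f' :: "real \<Rightarrow> real"
  assumes der: "\<And>t. t \<ge> a \<Longrightarrow> (f has_real_derivative f' t) (at t)"
    and lim: "(f' \<longlongrightarrow> 0) at_top" and c: "c \<ge> 0"
  shows "((\<lambda>t. integral {t-c..t} f - c * f t) \<longlongrightarrow> 0) at_top"
proof (rule tendstoI)
  fix e :: real assume e: "e > 0"
  have "e / (c * c + 1) > 0" using e c by (simp add: add_nonneg_pos)
  from tendstoD[OF lim this] have "eventually (\<lambda>t. dist (f' t) 0 < e / (c * c + 1)) at_top" .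
  then obtain t0 where t0: "\<And>t. t \<ge> t0 \<Longrightarrow> \<bar>f' t\<bar> < e / (c * c + 1)"
    by (auto simp: eventually_at_top_linorder)
  have "\<forall>t\<ge>max t0 a + c. dist (integral {t-c..t} f - c * f t) 0 < e"
  proof (intro allI impI)
    fix t assume t: "t \<ge> max t0 a + c"
    have bnd: "\<bar>f s - f t\<bar> \<le> c * (e / (c * c + 1))" if s: "s \<in> {t-c..t}" for s
    proof (cases "s = t")
      case True then show ?thesis using c e by simp
    next
      case False
      then have "s < t" using s by auto
      from MVT2[OF this, of f f'] der t s
      obtain z where z: "s < z" "z < t" "f t - f s = (t - s) * f' z"
        by force
      have "\<bar>f' z\<bar> < e / (c * c + 1)" using t z s by (intro t0) auto
      then have "(t - s) * \<bar>f' z\<bar> \<le> c * (e / (c * c + 1))"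
        using c s by (intro mult_mono) auto
      then have "\<bar>(t - s) * f' z\<bar> \<le> c * (e / (c * c + 1))"
        using s by (simp add: abs_mult)
      then show ?thesis using z by (simp add: abs_minus_commute)
    qed
    have cont: "continuous_on {t-c..t} f"
    proof (intro continuous_at_imp_continuous_on ballI)
      fix s assume "s \<in> {t-c..t}"
      then have "s \<ge> a" using t c by auto
      then show "isCont f s" using der DERIV_isCont by blast
    qed
    have hi: "((\<lambda>s. f s - f t) has_integral (integral {t-c..t} f - c * f t)) {t-c..t}"
      using has_integral_diff[OF integrable_integral[OF integrable_continuous_real[OF cont]]
          has_integral_const_real[of "f t" "t-c" t]] c by (simp add: algebra_simps)
    have "norm (integral {t-c..t} f - c * f t) \<le> c * (e / (c * c + 1)) * (t - (t - c))"
      using has_integral_bound_real[OF _ _ hi, of "c * (e / (c * c + 1))" "{}"] bnd c e by auto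
    also have "\<dots> = c * c * (e / (c * c + 1))" using c by simp
    also have "\<dots> = (c * c * e) / (c * c + 1)" by simp
    also have "\<dots> < e"
    proof -
      have p: "c * c + 1 > 0" by (simp add: add_nonneg_pos)
      have "c * c * e < e * (c * c + 1)" using e by (simp add: algebra_simps)
      then show ?thesis using p by (subst pos_divide_less_eq) auto
    qed
    finally show "dist (integral {t-c..t} f - c * f t) 0 < e" by (simp add: dist_real_def)
  qed
  then show "eventually (\<lambda>t. dist (integral {t-c..t} f - c * f t) 0 < e) at_top"
    by (auto simp: eventually_at_top_linorder)
qed


lemma barbalat:
  fixes f f' :: "real \<Rightarrow> real"
  assumes der: "\<And>t. t \<ge> a \<Longrightarrow> (f has_real_derivative f' t) (at t)"
    and bd: "\<And>t. t \<ge> a \<Longrightarrow> \<bar>f' t\<bar> \<le> L"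
    and nn: "\<And>t. t \<ge> a \<Longrightarrow> f t \<ge> 0"
    and ib: "\<And>t. t \<ge> a \<Longrightarrow> integral {a..t} f \<le> B"
  shows "(f \<longlongrightarrow> 0) at_top"
proof (rule tendstoI)
  fix e :: real assume e: "e > 0"
  define F where "F t = integral {a..t} f" for t
  have cont: "continuous_on {a..} f"
    using der by (intro continuous_at_imp_continuous_on ballI DERIV_isCont) auto
  have intg: "f integrable_on {s..t}" if "a \<le> s" for s t
    by (rule integrable_continuous_real, rule continuous_on_subset[OF cont]) (use that in auto)
  have Fsplit: "F t = F s + integral {s..t} f" if "a \<le> s" "s \<le> t" for s t
    unfolding F_def using Henstock_Kurzweil_Integration.integral_combine[OF that intg[OF order_refl, of t]] by simp
  have Fmono: "F s \<le> F t" if "a \<le> s" "s \<le> t" for s t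
  proof -
    have "integral {s..t} f \<ge> 0" using that nn by (intro integral_nonneg intg) auto
    then show ?thesis using Fsplit[OF that] by simp
  qed
  define l where "l = (SUP t\<in>{a..}. F t)"
  have bdd: "bdd_above (F ` {a..})" using ib unfolding F_def bdd_above_def by auto
  have Fle: "F t \<le> l" if "t \<ge> a" for t
    unfolding l_def using bdd that by (intro cSUP_upper) auto
  define L' where "L' = max L 1"
  have L'pos: "L' > 0" and LL': "L \<le> L'" unfolding L'_def by auto
  define d where "d = e / (2 * L')"
  have dpos: "d > 0" using e L'pos by (simp add: d_def)
  have "l - d * e / 2 < l" using dpos e by simp
  then obtain t0 where t0: "t0 \<ge> a" "F t0 > l - d * e / 2"
    unfolding l_def using bdd by (subst (asm) less_cSUP_iff) auto
  have "f t < e" if t: "t \<ge> t0" for t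
  proof (rule ccontr)
    assume "\<not> f t < e"
    then have ft: "f t \<ge> e" by simp
    have lower: "f s \<ge> e / 2" if s: "s \<in> {t..t+d}" for s
    proof (cases "s = t")
      case True then show ?thesis using ft e by simp
    next
      case False
      then have "t < s" using s by auto
      from MVT2[OF this, of f f'] der t t0 s
      obtain z where z: "t < z" "z < s" "f s - f t = (s - t) * f' z"
        by force
      have "\<bar>f' z\<bar> \<le> L'" using bd[of z] LL' z t t0 by auto
      then have "(s - t) * \<bar>f' z\<bar> \<le> d * L'"
        using s dpos by (intro mult_mono) auto
      also have "d * L' = e / 2" using L'pos by (simp add: d_def)
      finally have "\<bar>f s - f t\<bar> \<le> e / 2" using z s by (simp add: abs_mult)
      then show ?thesis using ft by linarith
    qed
    have "integral {t..t+d} (\<lambda>_. e / 2) \<le> integral {t..t+d} f"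
      using lower t t0 by (intro integral_le intg) auto
    then have I: "integral {t..t+d} f \<ge> d * e / 2" using dpos by simp
    have e1: "F (t + d) = F t + integral {t..t+d} f"
      using t t0 dpos by (intro Fsplit) auto
    have e2: "F t \<ge> F t0" using t t0 by (intro Fmono) auto
    have "F (t + d) > l" using I t0 e1 e2 by linarith
    moreover have "F (t + d) \<le> l" using Fle t t0 dpos by auto
    ultimately show False by simp
  qed
  then show "eventually (\<lambda>t. dist (f t) 0 < e) at_top"
    using nn t0 unfolding eventually_at_top_linorder
    by (intro exI[of _ t0]) (auto simp: dist_real_def)
qed


lemma shift_cont:
  fixes f :: "real \<Rightarrow> real"
  assumes "continuous_on {a..} f" "c \<le> -a"
  shows "continuous_on {0..} (\<lambda>t. f (t - c))"
proof (rule continuous_on_compose2[OF assms(1)])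
  show "continuous_on {0..} (\<lambda>t::real. t - c)" by (intro continuous_intros)
  show "(\<lambda>t. t - c) ` {0..} \<subseteq> {a..}" using assms(2) by auto
qed

locale dde =
  fixes p b d q \<tau> K \<beta> :: real and u y k1 k2 :: "real \<Rightarrow> real"
  assumes p: "p > 0" and b: "b > 0" and dlt: "\<bar>d\<bar> < b" and tau: "\<tau> > 0" and beta: "\<beta> > 0"
    and qdef: "q = b + d"
    and ucont: "continuous_on {-2*\<tau>..} u" and ycont: "continuous_on {-2*\<tau>..} y"
    and k1cont: "continuous_on {0..} k1" and k2cont: "continuous_on {0..} k2"
    and k1b: "\<And>t. t \<ge> 0 \<Longrightarrow> \<bar>k1 t\<bar> \<le> K * exp (-\<beta>*t)"
    and k2b: "\<And>t. t \<ge> 0 \<Longrightarrow> \<bar>k2 t\<bar> \<le> K * exp (-\<beta>*t)"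
    and du: "\<And>t. t > 0 \<Longrightarrow> (u has_real_derivative (-p * u t - q * y (t-\<tau>) + k1 t)) (at t)"
    and dy: "\<And>t. t > 0 \<Longrightarrow> (y has_real_derivative (-b * y t - p * u (t-\<tau>) - d * y (t-2*\<tau>) + k2 t)) (at t)"
begin

definition "ud t = -p * u t - q * y (t-\<tau>) + k1 t"
definition "yd t = -b * y t - p * u (t-\<tau>) - d * y (t-2*\<tau>) + k2 t"
definition "z t = -b * y t - p * u (t-\<tau>) - d * y (t-2*\<tau>)"
definition "g t = -b * k2 t - p * k1 (t-\<tau>) - d * k2 (t-2*\<tau>)"
definition "zd t = -b * yd t - p * ud (t-\<tau>) - d * yd (t-2*\<tau>)"
definition "S t = p * b * y t - d * z t"
definition "P t = (p+b) * (z t)\<^sup>2 + 2*p*b * y t * z t + p*b*(p+q) * (y t)\<^sup>2"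
definition "GS t = integral {0..t} (\<lambda>s. (S s)\<^sup>2)"
definition "V t = P t + (GS t - GS (t - 2*\<tau>))"
definition "Vd t = 2*(p+b) * z t * zd t + 2*p*b*(yd t * z t + y t * zd t)
   + 2*p*b*(p+q) * y t * yd t + (S t)\<^sup>2 - (S (t - 2*\<tau>))\<^sup>2"
definition "\<kappa> = p\<^sup>2 + b\<^sup>2 - d\<^sup>2"

lemma Kpos: "K \<ge> 0"
  using order_trans[OF abs_ge_zero k1b[of 0]] by simp

lemma q_pos: "q > 0" using qdef dlt by linarith

lemma kappa_pos: "\<kappa> > 0"
proof -
  have "\<bar>d\<bar> * \<bar>d\<bar> < b * b" using dlt by (intro mult_strict_mono) auto
  then have "d\<^sup>2 < b\<^sup>2" by (simp add: power2_eq_square abs_mult_self_eq)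
  moreover have "p\<^sup>2 > 0" using p by simp
  ultimately show ?thesis unfolding \<kappa>_def by linarith
qed

lemma du': "t > 0 \<Longrightarrow> (u has_real_derivative ud t) (at t)"
  using du unfolding ud_def .
lemma dy': "t > 0 \<Longrightarrow> (y has_real_derivative yd t) (at t)"
  using dy unfolding yd_def .

lemma yd_z: "yd t = z t + k2 t"
  unfolding yd_def z_def by simp

lemma z_cont: "continuous_on {0..} z"
proof -
  have "continuous_on {0..} (\<lambda>t. y (t - 0))" using ycont tau by (intro shift_cont) auto
  moreover have "continuous_on {0..} (\<lambda>t. u (t - \<tau>))" using ucont tau by (intro shift_cont) auto
  moreover have "continuous_on {0..} (\<lambda>t. y (t - 2*\<tau>))" using ycont by (intro shift_cont) auto
  ultimately show ?thesis unfolding z_def by (auto intro!: continuous_intros)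
qed

lemma y_cont0: "continuous_on {0..} y"
  by (rule continuous_on_subset[OF ycont]) (use tau in auto)

lemma S_cont: "continuous_on {0..} S"
  unfolding S_def using z_cont y_cont0 by (auto intro!: continuous_intros)

lemma S2_cont: "continuous_on {0..} (\<lambda>s. (S s)\<^sup>2)"
  using S_cont by (auto intro!: continuous_intros)

lemma shift_deriv:
  fixes f f' :: "real \<Rightarrow> real"
  assumes "(f has_real_derivative f' (t - c)) (at (t - c))"
  shows "((\<lambda>s. f (s - c)) has_real_derivative f' (t - c)) (at t)"
  using DERIV_shift[of f "f' (t - c)" t "-c"] assms by simp

lemma z_deriv: "t > 2*\<tau> \<Longrightarrow> (z has_real_derivative zd t) (at t)"
proof -
  assume t: "t > 2*\<tau>"
  have a: "(y has_real_derivative yd t) (at t)" using t tau by (intro dy') auto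
  have b: "((\<lambda>s. u (s - \<tau>)) has_real_derivative ud (t - \<tau>)) (at t)"
    using t tau by (intro shift_deriv du') auto
  have c: "((\<lambda>s. y (s - 2*\<tau>)) has_real_derivative yd (t - 2*\<tau>)) (at t)"
    using t tau by (intro shift_deriv dy') auto
  have "((\<lambda>s. -b * y s - p * u (s-\<tau>) - d * y (s-2*\<tau>)) has_real_derivative
      (-b * yd t - p * ud (t-\<tau>) - d * yd (t-2*\<tau>))) (at t)"
    using DERIV_diff[OF DERIV_diff[OF DERIV_cmult[OF a, of "-b"] DERIV_cmult[OF b, of p]] DERIV_cmult[OF c, of d]]
    by simp
  then show ?thesis unfolding z_def[abs_def] zd_def .
qed

lemma zd_eq: "zd t = -(p+b) * z t - p*b * y t + S (t - 2*\<tau>) + g t"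
proof -
  have e1: "t - \<tau> - \<tau> = t - 2*\<tau>" by simp
  have e2: "t - 2*\<tau> - \<tau> = t - \<tau> - 2*\<tau>" by simp
  show ?thesis
    unfolding zd_def yd_def ud_def S_def z_def g_def e1 e2
    by (simp add: algebra_simps qdef)
qed

lemma GS_deriv: "t > 0 \<Longrightarrow> (GS has_real_derivative (S t)\<^sup>2) (at t)"
  unfolding GS_def[abs_def] by (rule deriv_integral_at[OF S2_cont])

lemma V_deriv: "t > 2*\<tau> \<Longrightarrow> (V has_real_derivative Vd t) (at t)"
proof -
  assume t: "t > 2*\<tau>"
  have a: "(y has_real_derivative yd t) (at t)" using t tau by (intro dy') auto
  have zz: "(z has_real_derivative zd t) (at t)" using t by (rule z_deriv)
  have g1: "(GS has_real_derivative (S t)\<^sup>2) (at t)" using t tau by (intro GS_deriv) auto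
  have g2: "((\<lambda>s. GS (s - 2*\<tau>)) has_real_derivative (S (t - 2*\<tau>))\<^sup>2) (at t)"
    using t tau shift_deriv[of GS "\<lambda>s. (S s)\<^sup>2" t "2*\<tau>"] GS_deriv by auto
  have "((\<lambda>s. (p+b) * (z s)\<^sup>2 + 2*p*b * y s * z s + p*b*(p+q) * (y s)\<^sup>2 + (GS s - GS (s - 2*\<tau>)))
     has_real_derivative
     ((p+b) * (2 * z t * zd t) + 2*p*b * (yd t * z t + y t * zd t) + p*b*(p+q) * (2 * y t * yd t)
       + ((S t)\<^sup>2 - (S (t - 2*\<tau>))\<^sup>2))) (at t)"
    by ((rule derivative_eq_intros a zz g1 g2 refl | simp)+) algebra
  note deriv = this
  moreover have "((p+b) * (2 * z t * zd t) + 2*p*b * (yd t * z t + y t * zd t) + p*b*(p+q) * (2 * y t * yd t)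
       + ((S t)\<^sup>2 - (S (t - 2*\<tau>))\<^sup>2)) = Vd t" unfolding Vd_def by algebra
  ultimately show ?thesis unfolding V_def[abs_def] P_def by (rule DERIV_cong)
qed

lemma Vd_eq: "Vd t = -(zd t - g t)\<^sup>2 - \<kappa> * (z t)\<^sup>2 + 2 * g t * ((p+b) * z t + p*b * y t)
   + 2*p*b * k2 t * (z t + (p+q) * y t)"
proof -
  have Ssub: "S (t - 2*\<tau>) = zd t + (p+b) * z t + p*b * y t - g t" by (simp add: zd_eq algebra_simps)
  show ?thesis unfolding Vd_def \<kappa>_def yd_z Ssub S_def[of t]
    using qdef by algebra
qed

end

lemma lin2:
  fixes c1 c2 C x y :: real
  assumes "c1 \<le> C" "c2 \<le> C" "x \<ge> 0" "y \<ge> 0"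
  shows "c1 * x + c2 * y \<le> C * (x + y)"
proof -
  have "c1 * x \<le> C * x" using assms by (intro mult_right_mono) auto
  moreover have "c2 * y \<le> C * y" using assms by (intro mult_right_mono) auto
  ultimately show ?thesis by (simp add: distrib_left)
qed

lemma abs_le_1_sq: "\<bar>a::real\<bar> \<le> 1 + a\<^sup>2"
proof (cases "\<bar>a\<bar> \<le> 1")
  case True then show ?thesis using zero_le_power2[of a] by linarith
next
  case False
  then have "\<bar>a\<bar> * 1 \<le> \<bar>a\<bar> * \<bar>a\<bar>" by (intro mult_left_mono) auto
  then show ?thesis by (simp add: power2_eq_square abs_mult_self_eq)
qed

context dde
begin

definition "c0 = min p (p*b*q)"
definition "Kg = K * (b + p * exp (\<beta>*\<tau>) + \<bar>d\<bar> * exp (2*\<beta>*\<tau>))"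
definition "C1 = 2 * Kg * (p+b+p*b) + 2*p*b*K*(1+p+q)"
definition "C2 = 2 + 1 / c0"
definition "Ke = C1 * C2"

lemma c0_pos: "c0 > 0" unfolding c0_def using p b q_pos by simp

lemma Kg_nonneg: "Kg \<ge> 0" unfolding Kg_def using Kpos p b by simp
lemma Ke_nonneg: "Ke \<ge> 0"
  unfolding Ke_def C1_def C2_def using Kg_nonneg Kpos p b q_pos c0_pos by simp

lemma P_alt: "P t = b * (z t + p * y t)\<^sup>2 + p * (z t)\<^sup>2 + p*b*q * (y t)\<^sup>2"
  unfolding P_def by (simp add: power2_eq_square algebra_simps)

lemma P_lower: "P t \<ge> c0 * ((z t)\<^sup>2 + (y t)\<^sup>2)"
proof -
  have "c0 * (z t)\<^sup>2 \<le> p * (z t)\<^sup>2" unfolding c0_def by (intro mult_right_mono) auto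
  moreover have "c0 * (y t)\<^sup>2 \<le> p*b*q * (y t)\<^sup>2" unfolding c0_def by (intro mult_right_mono) auto
  moreover have "b * (z t + p * y t)\<^sup>2 \<ge> 0" using b by simp
  ultimately show ?thesis unfolding P_alt by (simp add: distrib_left)
qed

lemma GS_split: "0 \<le> s \<Longrightarrow> s \<le> t \<Longrightarrow> GS t = GS s + integral {s..t} (\<lambda>r. (S r)\<^sup>2)"
proof -
  assume a: "0 \<le> s" "s \<le> t"
  have "(\<lambda>r. (S r)\<^sup>2) integrable_on {0..t}"
    by (rule integrable_continuous_real, rule continuous_on_subset[OF S2_cont]) auto
  from Henstock_Kurzweil_Integration.integral_combine[OF a this] show ?thesis
    unfolding GS_def by simp
qed

lemma V_ge_P: "t \<ge> 2*\<tau> \<Longrightarrow> V t \<ge> P t"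
proof -
  assume t: "t \<ge> 2*\<tau>"
  have "GS t = GS (t - 2*\<tau>) + integral {t - 2*\<tau>..t} (\<lambda>r. (S r)\<^sup>2)"
    using t tau by (intro GS_split) auto
  moreover have "integral {t - 2*\<tau>..t} (\<lambda>r. (S r)\<^sup>2) \<ge> 0"
    by (rule integral_nonneg) (rule integrable_continuous_real, rule continuous_on_subset[OF S2_cont], use t tau in auto)
  ultimately show ?thesis unfolding V_def by simp
qed

lemma P_nonneg: "P t \<ge> 0"
proof -
  have "c0 * ((z t)\<^sup>2 + (y t)\<^sup>2) \<ge> 0" using c0_pos by simp
  then show ?thesis using P_lower[of t] by linarith
qed

lemma V_nonneg: "t \<ge> 2*\<tau> \<Longrightarrow> V t \<ge> 0"
  using V_ge_P[of t] P_nonneg[of t] by linarith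

lemma sq_le_V: "t \<ge> 2*\<tau> \<Longrightarrow> (z t)\<^sup>2 + (y t)\<^sup>2 \<le> V t / c0"
proof -
  assume t: "t \<ge> 2*\<tau>"
  have "c0 * ((z t)\<^sup>2 + (y t)\<^sup>2) \<le> V t" using P_lower[of t] V_ge_P[OF t] by linarith
  then show ?thesis using c0_pos by (simp add: pos_le_divide_eq mult.commute)
qed

lemma exp_shift: "exp (-\<beta> * (t - c)) = exp (\<beta> * c) * exp (-\<beta> * t)"
  by (simp add: exp_add[symmetric] algebra_simps)

lemma g_bound: "t \<ge> 2*\<tau> \<Longrightarrow> \<bar>g t\<bar> \<le> Kg * exp (-\<beta> * t)"
proof -
  assume t: "t \<ge> 2*\<tau>"
  have a: "\<bar>k2 t\<bar> \<le> K * exp (-\<beta> * t)" using t tau by (intro k2b) auto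
  have b1: "\<bar>k1 (t - \<tau>)\<bar> \<le> K * (exp (\<beta> * \<tau>) * exp (-\<beta> * t))"
    using k1b[of "t - \<tau>"] t tau exp_shift[of t \<tau>] by auto
  have c: "\<bar>k2 (t - 2*\<tau>)\<bar> \<le> K * (exp (\<beta> * (2*\<tau>)) * exp (-\<beta> * t))"
    using k2b[of "t - 2*\<tau>"] t tau exp_shift[of t "2*\<tau>"] by auto
  have "\<bar>g t\<bar> \<le> b * \<bar>k2 t\<bar> + p * \<bar>k1 (t - \<tau>)\<bar> + \<bar>d\<bar> * \<bar>k2 (t - 2*\<tau>)\<bar>"
  proof -
    have "\<bar>g t\<bar> \<le> \<bar>b * k2 t\<bar> + \<bar>p * k1 (t - \<tau>)\<bar> + \<bar>d * k2 (t - 2*\<tau>)\<bar>"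
      unfolding g_def by linarith
    then show ?thesis using b p by (simp add: abs_mult)
  qed
  also have "\<dots> \<le> b * (K * exp (-\<beta> * t)) + p * (K * (exp (\<beta> * \<tau>) * exp (-\<beta> * t)))
      + \<bar>d\<bar> * (K * (exp (\<beta> * (2*\<tau>)) * exp (-\<beta> * t)))"
    using a b1 c b p by (intro add_mono mult_left_mono) auto
  also have "\<dots> = Kg * exp (-\<beta> * t)" unfolding Kg_def by (simp add: algebra_simps)
  finally show ?thesis .
qed

lemma forcing_bound:
  assumes t: "t \<ge> 2*\<tau>"
  shows "\<bar>2 * g t * ((p+b) * z t + p*b * y t) + 2*p*b * k2 t * (z t + (p+q) * y t)\<bar>
          \<le> Ke * exp (-\<beta> * t) * (1 + V t)"
proof -
  define A where "A = \<bar>z t\<bar> + \<bar>y t\<bar>"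
  define e where "e = exp (-\<beta> * t)"
  have A0: "A \<ge> 0" unfolding A_def by simp
  have e0: "e \<ge> 0" unfolding e_def by simp
  have m: "\<bar>(p+b) * z t + p*b * y t\<bar> \<le> (p+b+p*b) * A"
  proof -
    have "\<bar>(p+b) * z t + p*b * y t\<bar> \<le> (p+b) * \<bar>z t\<bar> + (p*b) * \<bar>y t\<bar>"
    proof -
      have "\<bar>(p+b) * z t + p*b * y t\<bar> \<le> \<bar>(p+b) * z t\<bar> + \<bar>p*b * y t\<bar>" by linarith
      then show ?thesis using p b by (simp add: abs_mult)
    qed
    also have "\<dots> \<le> (p+b+p*b) * A" unfolding A_def using p b by (intro lin2) auto
    finally show ?thesis .
  qed
  have w: "\<bar>z t + (p+q) * y t\<bar> \<le> (1+p+q) * A"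
  proof -
    have "\<bar>z t + (p+q) * y t\<bar> \<le> 1 * \<bar>z t\<bar> + (p+q) * \<bar>y t\<bar>"
    proof -
      have "\<bar>z t + (p+q) * y t\<bar> \<le> \<bar>z t\<bar> + \<bar>(p+q) * y t\<bar>" by linarith
      then show ?thesis using p q_pos by (simp add: abs_mult)
    qed
    also have "\<dots> \<le> (1+p+q) * A" unfolding A_def using p q_pos by (intro lin2) auto
    finally show ?thesis .
  qed
  have gb: "\<bar>g t\<bar> \<le> Kg * e" unfolding e_def using g_bound[OF t] .
  have kb: "\<bar>k2 t\<bar> \<le> K * e" unfolding e_def using k2b[of t] t tau by auto
  have "\<bar>2 * g t * ((p+b) * z t + p*b * y t) + 2*p*b * k2 t * (z t + (p+q) * y t)\<bar>
      \<le> 2 * (\<bar>g t\<bar> * \<bar>(p+b) * z t + p*b * y t\<bar>) + 2*p*b * (\<bar>k2 t\<bar> * \<bar>z t + (p+q) * y t\<bar>)"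
  proof -
    have "\<bar>2 * g t * ((p+b) * z t + p*b * y t) + 2*p*b * k2 t * (z t + (p+q) * y t)\<bar>
      \<le> \<bar>2 * g t * ((p+b) * z t + p*b * y t)\<bar> + \<bar>2*p*b * k2 t * (z t + (p+q) * y t)\<bar>" by linarith
    then show ?thesis using p b by (simp add: abs_mult)
  qed
  also have "\<dots> \<le> 2 * ((Kg * e) * ((p+b+p*b) * A)) + 2*p*b * ((K * e) * ((1+p+q) * A))"
    using m w gb kb p b by (intro add_mono mult_left_mono mult_mono) auto
  also have "\<dots> = C1 * e * A" unfolding C1_def by (simp add: algebra_simps)
  also have "\<dots> \<le> C1 * e * (C2 * (1 + V t))"
  proof (rule mult_left_mono)
    have "A \<le> (1 + (z t)\<^sup>2) + (1 + (y t)\<^sup>2)" unfolding A_def using abs_le_1_sq by (intro add_mono)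
    also have "\<dots> \<le> 2 + V t / c0" using sq_le_V[OF t] by simp
    also have "\<dots> \<le> C2 * (1 + V t)"
    proof -
      have V0: "V t \<ge> 0" using V_nonneg[OF t] .
      have "V t / c0 \<le> (1 / c0) * (1 + V t)" using c0_pos V0 by (simp add: divide_right_mono)
      moreover have "2 \<le> 2 * (1 + V t)" using V0 by simp
      ultimately show ?thesis unfolding C2_def by (simp add: algebra_simps)
    qed
    finally show "A \<le> C2 * (1 + V t)" .
    show "0 \<le> C1 * e" unfolding C1_def using Kg_nonneg Kpos p b q_pos e0 by simp
  qed
  also have "\<dots> = Ke * exp (-\<beta> * t) * (1 + V t)" unfolding Ke_def e_def by simp
  finally show ?thesis .
qed

lemma Vd_bound: "t \<ge> 2*\<tau> \<Longrightarrow> Vd t \<le> - \<kappa> * (z t)\<^sup>2 + Ke * exp (-\<beta> * t) * (1 + V t)"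
proof -
  assume t: "t \<ge> 2*\<tau>"
  have h1: "2 * g t * ((p+b) * z t + p*b * y t) + 2*p*b * k2 t * (z t + (p+q) * y t)
          \<le> Ke * exp (-\<beta> * t) * (1 + V t)"
    using forcing_bound[OF t] by (rule abs_le_D1)
  have h2: "-(zd t - g t)\<^sup>2 \<le> 0" by simp
  show ?thesis using Vd_eq[of t] h1 h2 by linarith
qed

end

context dde
begin

definition "E1 t = exp ((Ke / \<beta>) * exp (-\<beta> * t))"
definition "W t = (1 + V t) * E1 t + \<kappa> * integral {0..t} (\<lambda>s. (z s)\<^sup>2)"
definition "Wd t = Vd t * E1 t + (1 + V t) * (E1 t * ((Ke / \<beta>) * (exp (-\<beta> * t) * (-\<beta>)))) + \<kappa> * (z t)\<^sup>2"

lemma E1_ge1: "E1 t \<ge> 1"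
  unfolding E1_def using Ke_nonneg beta by simp

lemma z2_cont: "continuous_on {0..} (\<lambda>s. (z s)\<^sup>2)"
  using z_cont by (auto intro!: continuous_intros)

lemma W_deriv: "t > 2*\<tau> \<Longrightarrow> (W has_real_derivative Wd t) (at t)"
proof -
  assume t: "t > 2*\<tau>"
  have v: "(V has_real_derivative Vd t) (at t)" using V_deriv[OF t] .
  have e: "(E1 has_real_derivative E1 t * ((Ke / \<beta>) * (exp (-\<beta> * t) * (-\<beta>)))) (at t)"
  proof -
    have d1: "((\<lambda>s. -\<beta> * s) has_real_derivative -\<beta> * 1) (at t)"
      by (rule DERIV_cmult[OF DERIV_ident])
    have d3: "((\<lambda>s. (Ke / \<beta>) * exp (-\<beta> * s)) has_real_derivative (Ke / \<beta>) * (exp (-\<beta> * t) * (-\<beta> * 1))) (at t)"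
      by (rule DERIV_cmult[OF DERIV_fun_exp[OF d1]])
    show ?thesis unfolding E1_def[abs_def] using DERIV_fun_exp[OF d3] by simp
  qed
  have i: "((\<lambda>s. integral {0..s} (\<lambda>s. (z s)\<^sup>2)) has_real_derivative (z t)\<^sup>2) (at t)"
    using t tau by (intro deriv_integral_at[OF z2_cont]) auto
  have m: "((\<lambda>s. (1 + V s) * E1 s) has_real_derivative
      (0 + Vd t) * E1 t + (E1 t * ((Ke / \<beta>) * (exp (-\<beta> * t) * (-\<beta>)))) * (1 + V t)) (at t)"
    by (rule DERIV_mult[OF DERIV_add[OF DERIV_const v] e])
  have "((\<lambda>s. (1 + V s) * E1 s + \<kappa> * integral {0..s} (\<lambda>s. (z s)\<^sup>2)) has_real_derivative
      (0 + Vd t) * E1 t + (E1 t * ((Ke / \<beta>) * (exp (-\<beta> * t) * (-\<beta>)))) * (1 + V t) + \<kappa> * (z t)\<^sup>2) (at t)"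
    by (rule DERIV_add[OF m DERIV_cmult[OF i]])
  then show ?thesis unfolding W_def[abs_def] Wd_def by (simp add: algebra_simps)
qed

lemma Wd_nonpos: "t > 2*\<tau> \<Longrightarrow> Wd t \<le> 0"
proof -
  assume t: "t > 2*\<tau>"
  define E where "E = E1 t"
  define ee where "ee = exp (-\<beta> * t)"
  have E1: "E \<ge> 1" unfolding E_def by (rule E1_ge1)
  have "Vd t * E \<le> (- \<kappa> * (z t)\<^sup>2 + Ke * ee * (1 + V t)) * E"
    using Vd_bound[of t] t E1 unfolding ee_def by (intro mult_right_mono) auto
  moreover have "(1 + V t) * (E * ((Ke / \<beta>) * (ee * (-\<beta>)))) = - (Ke * ee * (1 + V t)) * E"
    using beta by (simp add: field_simps)
  ultimately have "Wd t \<le> - \<kappa> * (z t)\<^sup>2 * E + \<kappa> * (z t)\<^sup>2"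
    unfolding Wd_def E_def[symmetric] ee_def[symmetric] by (simp add: algebra_simps)
  also have "\<dots> = \<kappa> * (z t)\<^sup>2 * (1 - E)" by (simp add: algebra_simps)
  also have "\<dots> \<le> 0"
    using kappa_pos E1 by (intro mult_nonneg_nonpos) auto
  finally show ?thesis .
qed

definition "T1 = 3 * \<tau>"
definition "Wm = (1 + V T1) * E1 T1"

lemma W_mono: "t \<ge> T1 \<Longrightarrow> W t \<le> W T1"
proof -
  assume t: "t \<ge> T1"
  show ?thesis
  proof (rule DERIV_nonpos_imp_nonincreasing[OF t])
    fix x assume "T1 \<le> x" "x \<le> t"
    then have x: "x > 2*\<tau>" using tau unfolding T1_def by auto
    show "\<exists>y. (W has_real_derivative y) (at x) \<and> y \<le> 0"
      using W_deriv[OF x] Wd_nonpos[OF x] by blast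
  qed
qed

lemma z2_int_split: "T1 \<le> t \<Longrightarrow> integral {0..t} (\<lambda>s. (z s)\<^sup>2) =
   integral {0..T1} (\<lambda>s. (z s)\<^sup>2) + integral {T1..t} (\<lambda>s. (z s)\<^sup>2)"
proof -
  assume t: "T1 \<le> t"
  have "(\<lambda>s. (z s)\<^sup>2) integrable_on {0..t}"
    by (rule integrable_continuous_real, rule continuous_on_subset[OF z2_cont]) auto
  moreover have "0 \<le> T1" using tau unfolding T1_def by simp
  ultimately show ?thesis
    using Henstock_Kurzweil_Integration.integral_combine[of 0 T1 t "\<lambda>s. (z s)\<^sup>2"] t by simp
qed

lemma z2_int_nonneg: "a \<le> t \<Longrightarrow> 0 \<le> a \<Longrightarrow> integral {a..t} (\<lambda>s. (z s)\<^sup>2) \<ge> 0"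
  by (rule integral_nonneg) (rule integrable_continuous_real, rule continuous_on_subset[OF z2_cont], auto)

lemma bounds:
  assumes t: "t \<ge> T1"
  shows "V t \<le> Wm" and "\<kappa> * integral {T1..t} (\<lambda>s. (z s)\<^sup>2) \<le> Wm"
proof -
  have T10: "0 \<le> T1" using tau unfolding T1_def by simp
  have t2: "t \<ge> 2*\<tau>" using t tau unfolding T1_def by simp
  have "W t \<le> W T1" using W_mono[OF t] .
  moreover have "W t = (1 + V t) * E1 t + \<kappa> * integral {0..T1} (\<lambda>s. (z s)\<^sup>2)
      + \<kappa> * integral {T1..t} (\<lambda>s. (z s)\<^sup>2)"
    unfolding W_def z2_int_split[OF t] by (simp add: distrib_left)
  moreover have "W T1 = Wm + \<kappa> * integral {0..T1} (\<lambda>s. (z s)\<^sup>2)"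
    unfolding W_def Wm_def by simp
  ultimately have main: "(1 + V t) * E1 t + \<kappa> * integral {T1..t} (\<lambda>s. (z s)\<^sup>2) \<le> Wm"
    by linarith
  have V0: "V t \<ge> 0" using V_nonneg[OF t2] .
  have I0: "\<kappa> * integral {T1..t} (\<lambda>s. (z s)\<^sup>2) \<ge> 0"
    using kappa_pos z2_int_nonneg[OF t T10] by simp
  have "(1 + V t) * 1 \<le> (1 + V t) * E1 t" using V0 E1_ge1 by (intro mult_left_mono) auto
  then have "1 + V t \<le> (1 + V t) * E1 t" by simp
  then show "V t \<le> Wm" using main I0 by linarith
  have "(1 + V t) * E1 t \<ge> 0" using V0 E1_ge1[of t] by simp
  then show "\<kappa> * integral {T1..t} (\<lambda>s. (z s)\<^sup>2) \<le> Wm" using main by linarith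
qed

end

lemma exp_decay_tendsto:
  fixes \<beta> :: real assumes "\<beta> > 0"
  shows "((\<lambda>t. exp (-\<beta> * t)) \<longlongrightarrow> 0) at_top"
proof (rule tendstoI)
  fix e :: real assume e: "e > 0"
  have "\<forall>t \<ge> (\<bar>ln e\<bar> + 1) / \<beta>. dist (exp (-\<beta> * t)) 0 < e"
  proof (intro allI impI)
    fix t assume "t \<ge> (\<bar>ln e\<bar> + 1) / \<beta>"
    then have "\<beta> * t \<ge> \<bar>ln e\<bar> + 1" using assms by (simp add: pos_divide_le_eq mult.commute)
    then have "-\<beta> * t < ln e" by linarith
    then have "exp (-\<beta> * t) < exp (ln e)" by simp
    then show "dist (exp (-\<beta> * t)) 0 < e" using e by simp
  qed
  then show "eventually (\<lambda>t. dist (exp (-\<beta> * t)) 0 < e) at_top"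
    unfolding eventually_at_top_linorder by blast
qed

context dde
begin

definition "T2 = 5 * \<tau>"
definition "R = 1 + Wm / c0"
definition "Lz = (p+b) * R + p*b*R + p*b*R + \<bar>d\<bar> * R + Kg"

lemma zy_bound: "t \<ge> T1 \<Longrightarrow> \<bar>z t\<bar> \<le> R \<and> \<bar>y t\<bar> \<le> R"
proof -
  assume t: "t \<ge> T1"
  have t2: "t \<ge> 2*\<tau>" using t tau unfolding T1_def by simp
  have "(z t)\<^sup>2 + (y t)\<^sup>2 \<le> Wm / c0"
  proof -
    have "V t / c0 \<le> Wm / c0" using bounds(1)[OF t] c0_pos by (simp add: divide_right_mono)
    then show ?thesis using sq_le_V[OF t2] by linarith
  qed
  then have "(z t)\<^sup>2 \<le> Wm / c0" "(y t)\<^sup>2 \<le> Wm / c0"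
    using zero_le_power2[of "z t"] zero_le_power2[of "y t"] by linarith+
  then show ?thesis unfolding R_def using abs_le_1_sq[of "z t"] abs_le_1_sq[of "y t"] by linarith
qed

lemma zd_bound: "t \<ge> T2 \<Longrightarrow> \<bar>zd t\<bar> \<le> Lz"
proof -
  assume t: "t \<ge> T2"
  have a: "\<bar>z t\<bar> \<le> R" "\<bar>y t\<bar> \<le> R" using zy_bound[of t] t tau unfolding T1_def T2_def by auto
  have c: "\<bar>z (t - 2*\<tau>)\<bar> \<le> R" "\<bar>y (t - 2*\<tau>)\<bar> \<le> R"
    using zy_bound[of "t - 2*\<tau>"] t tau unfolding T1_def T2_def by auto
  have gb: "\<bar>g t\<bar> \<le> Kg"
  proof -
    have "\<bar>g t\<bar> \<le> Kg * exp (-\<beta> * t)" using g_bound[of t] t tau unfolding T2_def by auto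
    also have "\<dots> \<le> Kg * 1" using Kg_nonneg t tau beta unfolding T2_def by (intro mult_left_mono) auto
    finally show ?thesis by simp
  qed
  have "\<bar>zd t\<bar> \<le> (p+b) * \<bar>z t\<bar> + p*b * \<bar>y t\<bar> + p*b * \<bar>y (t - 2*\<tau>)\<bar> + \<bar>d\<bar> * \<bar>z (t - 2*\<tau>)\<bar> + \<bar>g t\<bar>"
  proof -
    have "\<bar>zd t\<bar> \<le> \<bar>(p+b) * z t\<bar> + \<bar>p*b * y t\<bar> + \<bar>p*b * y (t - 2*\<tau>)\<bar> + \<bar>d * z (t - 2*\<tau>)\<bar> + \<bar>g t\<bar>"
      unfolding zd_eq S_def by linarith
    then show ?thesis using p b by (simp add: abs_mult)
  qed
  also have "\<dots> \<le> (p+b) * R + p*b*R + p*b*R + \<bar>d\<bar> * R + Kg"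
    using a c gb p b by (intro add_mono mult_left_mono) auto
  finally show ?thesis unfolding Lz_def .
qed

lemma z_tendsto: "(z \<longlongrightarrow> 0) at_top"
proof -
  have T2g: "T2 > 2*\<tau>" "T2 \<ge> T1" using tau unfolding T2_def T1_def by auto
  have "((\<lambda>t. (z t)\<^sup>2) \<longlongrightarrow> 0) at_top"
  proof (rule barbalat[where a = T2 and f' = "\<lambda>t. 2 * z t * zd t" and L = "2 * R * Lz" and B = "Wm / \<kappa>"])
    fix t assume t: "t \<ge> T2"
    then have t2: "t > 2*\<tau>" using T2g by auto
    have "((\<lambda>x. z x * z x) has_real_derivative zd t * z t + zd t * z t) (at t)"
      using DERIV_mult[OF z_deriv[OF t2] z_deriv[OF t2]] .
    then show "((\<lambda>t. (z t)\<^sup>2) has_real_derivative 2 * z t * zd t) (at t)"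
      by (simp add: power2_eq_square algebra_simps)
    have "\<bar>z t\<bar> \<le> R" using zy_bound[of t] t T2g by auto
    moreover have "\<bar>zd t\<bar> \<le> Lz" using zd_bound t by auto
    ultimately have "\<bar>z t\<bar> * \<bar>zd t\<bar> \<le> R * Lz" by (intro mult_mono) auto
    then show "\<bar>2 * z t * zd t\<bar> \<le> 2 * R * Lz" by (simp add: abs_mult)
    show "(z t)\<^sup>2 \<ge> 0" by simp
    have T10: "0 \<le> T1" using tau unfolding T1_def by simp
    have split: "integral {T1..t} (\<lambda>s. (z s)\<^sup>2) = integral {T1..T2} (\<lambda>s. (z s)\<^sup>2) + integral {T2..t} (\<lambda>s. (z s)\<^sup>2)"
    proof -
      have "(\<lambda>s. (z s)\<^sup>2) integrable_on {T1..t}"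
        by (rule integrable_continuous_real, rule continuous_on_subset[OF z2_cont]) (use T10 in auto)
      then show ?thesis
        using Henstock_Kurzweil_Integration.integral_combine[of T1 T2 t "\<lambda>s. (z s)\<^sup>2"] T2g t by simp
    qed
    have "integral {T1..T2} (\<lambda>s. (z s)\<^sup>2) \<ge> 0" using T2g T10 by (intro z2_int_nonneg) auto
    then have "integral {T2..t} (\<lambda>s. (z s)\<^sup>2) \<le> integral {T1..t} (\<lambda>s. (z s)\<^sup>2)" using split by simp
    also have "\<dots> \<le> Wm / \<kappa>" using bounds(2)[of t] t T2g kappa_pos by (simp add: pos_le_divide_eq mult.commute)
    finally show "integral {T2..t} (\<lambda>s. (z s)\<^sup>2) \<le> Wm / \<kappa>" .
  qed
  then have "((\<lambda>t. sqrt ((z t)\<^sup>2)) \<longlongrightarrow> sqrt 0) at_top" by (rule tendsto_real_sqrt)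
  then have "((\<lambda>t. \<bar>z t\<bar>) \<longlongrightarrow> 0) at_top" by simp
  then show ?thesis by (simp add: tendsto_rabs_zero_iff)
qed

lemma k1_tendsto: "(k1 \<longlongrightarrow> 0) at_top"
proof (rule Lim_null_comparison)
  show "eventually (\<lambda>t. norm (k1 t) \<le> K * exp (-\<beta> * t)) at_top"
    using eventually_ge_at_top[of "0::real"] by (rule eventually_mono) (use k1b in auto)
  show "((\<lambda>t. K * exp (-\<beta> * t)) \<longlongrightarrow> 0) at_top"
    using tendsto_mult[OF tendsto_const exp_decay_tendsto[OF beta], of K] by simp
qed

lemma k2_tendsto: "(k2 \<longlongrightarrow> 0) at_top"
proof (rule Lim_null_comparison)
  show "eventually (\<lambda>t. norm (k2 t) \<le> K * exp (-\<beta> * t)) at_top"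
    using eventually_ge_at_top[of "0::real"] by (rule eventually_mono) (use k2b in auto)
  show "((\<lambda>t. K * exp (-\<beta> * t)) \<longlongrightarrow> 0) at_top"
    using tendsto_mult[OF tendsto_const exp_decay_tendsto[OF beta], of K] by simp
qed

lemma yd_tendsto: "(yd \<longlongrightarrow> 0) at_top"
  unfolding yd_z using tendsto_add[OF z_tendsto k2_tendsto] by simp

lemma ydiff_tendsto: "c \<ge> 0 \<Longrightarrow> ((\<lambda>t. y t - y (t - c)) \<longlongrightarrow> 0) at_top"
  by (rule diff_tendsto_zero[OF _ yd_tendsto, where a = \<tau>]) (use tau dy' in auto)

lemma ud_alt: "ud s = z (s + \<tau>) + b * (y (s + \<tau>) - y (s + \<tau> - 2*\<tau>)) + k1 s"
proof -
  have e1: "s + \<tau> - \<tau> = s" by simp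
  have e2: "s + \<tau> - 2*\<tau> = s - \<tau>" by simp
  show ?thesis unfolding ud_def z_def e1 e2 using qdef by (simp add: algebra_simps)
qed

lemma ud_tendsto: "(ud \<longlongrightarrow> 0) at_top"
proof -
  have a: "((\<lambda>s. z (s + \<tau>)) \<longlongrightarrow> 0) at_top" by (rule tendsto_shift_at_top[OF z_tendsto])
  have b: "((\<lambda>s. y (s + \<tau>) - y (s + \<tau> - 2*\<tau>)) \<longlongrightarrow> 0) at_top"
    using tendsto_shift_at_top[OF ydiff_tendsto[of "2*\<tau>"], of \<tau>] tau by simp
  show ?thesis unfolding ud_alt[abs_def]
    using tendsto_add[OF tendsto_add[OF a tendsto_mult[OF tendsto_const b, of b]] k1_tendsto] by simp
qed

lemma pu_qy_alt: "p * u s + q * y s = - z (s + \<tau>) - b * (y (s + \<tau>) - y (s + \<tau> - \<tau>)) + d * (y s - y (s - \<tau>))"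
proof -
  have e1: "s + \<tau> - \<tau> = s" by simp
  have e2: "s + \<tau> - 2*\<tau> = s - \<tau>" by simp
  show ?thesis unfolding z_def e1 e2 using qdef by (simp add: algebra_simps)
qed

lemma pu_qy_tendsto: "((\<lambda>s. p * u s + q * y s) \<longlongrightarrow> 0) at_top"
proof -
  have a: "((\<lambda>s. z (s + \<tau>)) \<longlongrightarrow> 0) at_top" by (rule tendsto_shift_at_top[OF z_tendsto])
  have b: "((\<lambda>s. y (s + \<tau>) - y (s + \<tau> - \<tau>)) \<longlongrightarrow> 0) at_top"
    using tendsto_shift_at_top[OF ydiff_tendsto[of "\<tau>"], of \<tau>] tau by simp
  have c: "((\<lambda>s. y s - y (s - \<tau>)) \<longlongrightarrow> 0) at_top" using ydiff_tendsto[of \<tau>] tau by simp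
  show ?thesis unfolding pu_qy_alt
    using tendsto_add[OF tendsto_diff[OF tendsto_minus[OF a] tendsto_mult[OF tendsto_const b, of b]]
        tendsto_mult[OF tendsto_const c, of d]] by simp
qed

end

lemma cont_G:
  fixes f :: "real \<Rightarrow> real"
  assumes f: "continuous_on {a..} f" and ac: "a \<le> -c" and c: "c \<ge> 0" and t: "t \<ge> 0"
  shows "continuous_on {0..t} (\<lambda>s. integral {a..s - c} f)"
proof (rule continuous_on_compose2[of "{a..t}" "\<lambda>x. integral {a..x} f"])
  show "continuous_on {a..t} (\<lambda>x. integral {a..x} f)"
    by (rule indefinite_integral_continuous_1, rule integrable_continuous_real,
        rule continuous_on_subset[OF f]) auto
  show "continuous_on {0..t} (\<lambda>s::real. s - c)" by (intro continuous_intros)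
  show "(\<lambda>s. s - c) ` {0..t} \<subseteq> {a..t}" using ac c by auto
qed

context dde
begin

definition "Gu t = integral {-2*\<tau>..t} u"
definition "Gy t = integral {-2*\<tau>..t} y"
definition "Hk t = integral {0..t} k1 - integral {0..t} k2"
definition "Q t = u t - y t + p * (Gu t - Gu (t - \<tau>)) - q * (Gy t - Gy (t - \<tau>))
   + d * (Gy t - Gy (t - 2*\<tau>)) - Hk t"

lemma G_deriv:
  assumes f: "continuous_on {-2*\<tau>..} f" and s: "s - c > -2*\<tau>"
  shows "((\<lambda>x. integral {-2*\<tau>..x - c} f) has_real_derivative f (s - c)) (at s)"
  using shift_deriv[of "\<lambda>x. integral {-2*\<tau>..x} f" f s c] deriv_integral_at[OF f s] by simp

lemma Q_deriv: "s > 0 \<Longrightarrow> (Q has_real_derivative 0) (at s)"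
proof -
  assume s: "s > 0"
  have a1: "((\<lambda>x. integral {-2*\<tau>..x - 0} u) has_real_derivative u (s - 0)) (at s)"
    using s tau by (intro G_deriv ucont) auto
  have a2: "((\<lambda>x. integral {-2*\<tau>..x - \<tau>} u) has_real_derivative u (s - \<tau>)) (at s)"
    using s tau by (intro G_deriv ucont) auto
  have b1: "((\<lambda>x. integral {-2*\<tau>..x - 0} y) has_real_derivative y (s - 0)) (at s)"
    using s tau by (intro G_deriv ycont) auto
  have b2: "((\<lambda>x. integral {-2*\<tau>..x - \<tau>} y) has_real_derivative y (s - \<tau>)) (at s)"
    using s tau by (intro G_deriv ycont) auto
  have b3: "((\<lambda>x. integral {-2*\<tau>..x - 2*\<tau>} y) has_real_derivative y (s - 2*\<tau>)) (at s)"
    using s tau by (intro G_deriv ycont) auto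
  have h1: "((\<lambda>x. integral {0..x} k1) has_real_derivative k1 s) (at s)"
    using s by (intro deriv_integral_at k1cont)
  have h2: "((\<lambda>x. integral {0..x} k2) has_real_derivative k2 s) (at s)"
    using s by (intro deriv_integral_at k2cont)
  have all: "((\<lambda>x. u x - y x + p * (integral {-2*\<tau>..x - 0} u - integral {-2*\<tau>..x - \<tau>} u)
      - q * (integral {-2*\<tau>..x - 0} y - integral {-2*\<tau>..x - \<tau>} y)
      + d * (integral {-2*\<tau>..x - 0} y - integral {-2*\<tau>..x - 2*\<tau>} y)
      - (integral {0..x} k1 - integral {0..x} k2)) has_real_derivative
      ud s - yd s + p * (u (s - 0) - u (s - \<tau>)) - q * (y (s - 0) - y (s - \<tau>))
      + d * (y (s - 0) - y (s - 2*\<tau>)) - (k1 s - k2 s)) (at s)"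
    by (intro DERIV_add DERIV_diff DERIV_cmult du'[OF s] dy'[OF s] a1 a2 b1 b2 b3 h1 h2)
  have "ud s - yd s + p * (u (s - 0) - u (s - \<tau>)) - q * (y (s - 0) - y (s - \<tau>))
      + d * (y (s - 0) - y (s - 2*\<tau>)) - (k1 s - k2 s) = 0"
    unfolding ud_def yd_def using qdef by (simp add: algebra_simps)
  with all show ?thesis unfolding Q_def[abs_def] Gu_def Gy_def Hk_def by simp
qed

lemma Q_cont: "t \<ge> 0 \<Longrightarrow> continuous_on {0..t} Q"
proof -
  assume t: "t \<ge> 0"
  have u0: "continuous_on {0..t} u" by (rule continuous_on_subset[OF ucont]) (use tau in auto)
  have y0: "continuous_on {0..t} y" by (rule continuous_on_subset[OF ycont]) (use tau in auto)
  have gu0: "continuous_on {0..t} (\<lambda>s. integral {-2*\<tau>..s - 0} u)" using tau t by (intro cont_G ucont) auto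
  have gu1: "continuous_on {0..t} (\<lambda>s. integral {-2*\<tau>..s - \<tau>} u)" using tau t by (intro cont_G ucont) auto
  have gy0: "continuous_on {0..t} (\<lambda>s. integral {-2*\<tau>..s - 0} y)" using tau t by (intro cont_G ycont) auto
  have gy1: "continuous_on {0..t} (\<lambda>s. integral {-2*\<tau>..s - \<tau>} y)" using tau t by (intro cont_G ycont) auto
  have gy2: "continuous_on {0..t} (\<lambda>s. integral {-2*\<tau>..s - 2*\<tau>} y)" using tau t by (intro cont_G ycont) auto
  have k10: "continuous_on {0..t} (\<lambda>s. integral {0..s} k1)"
    by (rule indefinite_integral_continuous_1, rule integrable_continuous_real,
        rule continuous_on_subset[OF k1cont]) auto
  have k20: "continuous_on {0..t} (\<lambda>s. integral {0..s} k2)"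
    by (rule indefinite_integral_continuous_1, rule integrable_continuous_real,
        rule continuous_on_subset[OF k2cont]) auto
  have "continuous_on {0..t} (\<lambda>x. u x - y x + p * (integral {-2*\<tau>..x - 0} u - integral {-2*\<tau>..x - \<tau>} u)
      - q * (integral {-2*\<tau>..x - 0} y - integral {-2*\<tau>..x - \<tau>} y)
      + d * (integral {-2*\<tau>..x - 0} y - integral {-2*\<tau>..x - 2*\<tau>} y)
      - (integral {0..x} k1 - integral {0..x} k2))"
    by (intro continuous_on_add continuous_on_diff continuous_on_mult continuous_on_const
        u0 y0 gu0 gu1 gy0 gy1 gy2 k10 k20)
  then show ?thesis unfolding Q_def[abs_def] Gu_def Gy_def Hk_def by simp
qed

lemma Q_const: "t \<ge> 0 \<Longrightarrow> Q t = Q 0"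
proof -
  assume t: "t \<ge> 0"
  show ?thesis
  proof (cases "t = 0")
    case False
    then have "0 < t" using t by simp
    from DERIV_isconst_end[OF this Q_cont[OF t]] Q_deriv show ?thesis by auto
  qed simp
qed

lemma G_diff:
  fixes f :: "real \<Rightarrow> real"
  assumes f: "continuous_on {-2*\<tau>..} f" and c: "0 \<le> c" "c \<le> 2*\<tau>" and t: "t \<ge> 0"
  shows "integral {-2*\<tau>..t} f - integral {-2*\<tau>..t - c} f = integral {t - c..t} f"
proof -
  have "f integrable_on {-2*\<tau>..t}"
    by (rule integrable_continuous_real, rule continuous_on_subset[OF f]) auto
  from Henstock_Kurzweil_Integration.integral_combine[OF _ _ this, of "t - c"] c t
  show ?thesis by simp
qed

definition "D = p + q + 2*\<tau>*p*b"

lemma D_pos: "D > 0" unfolding D_def using p q_pos b tau by (simp add: add_pos_pos)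

lemma limits:
  assumes H1: "((\<lambda>t. integral {0..t} k1) \<longlongrightarrow> H1) at_top"
    and H2: "((\<lambda>t. integral {0..t} k2) \<longlongrightarrow> H2) at_top"
  shows "(y \<longlongrightarrow> - p * ((Q 0 + H1 - H2) / D)) at_top"
    and "(u \<longlongrightarrow> q * ((Q 0 + H1 - H2) / D)) at_top"
proof -
  define e where "e t = (p * u t + q * y t) / p" for t
  define r1 where "r1 t = integral {t-\<tau>..t} u - \<tau> * u t" for t
  define r2 where "r2 t = integral {t-\<tau>..t} y - \<tau> * y t" for t
  define r3 where "r3 t = integral {t-2*\<tau>..t} y - (2*\<tau>) * y t" for t
  have e0: "(e \<longlongrightarrow> 0) at_top" unfolding e_def[abs_def]
    using tendsto_divide[OF pu_qy_tendsto tendsto_const, of p] p by simp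
  have r10: "(r1 \<longlongrightarrow> 0) at_top" unfolding r1_def[abs_def]
    by (rule int_approx_tendsto[OF _ ud_tendsto, where a = \<tau>]) (use tau du' in auto)
  have r20: "(r2 \<longlongrightarrow> 0) at_top" unfolding r2_def[abs_def]
    by (rule int_approx_tendsto[OF _ yd_tendsto, where a = \<tau>]) (use tau dy' in auto)
  have r30: "(r3 \<longlongrightarrow> 0) at_top" unfolding r3_def[abs_def]
    by (rule int_approx_tendsto[OF _ yd_tendsto, where a = \<tau>]) (use tau dy' in auto)
  have Hk0: "(Hk \<longlongrightarrow> H1 - H2) at_top" unfolding Hk_def[abs_def] by (rule tendsto_diff[OF H1 H2])
  define F where "F t = (p / D) * ((1 + p*\<tau>) * e t + p * r1 t - q * r2 t + d * r3 t - Hk t - Q 0)" for t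
  have F0: "(F \<longlongrightarrow> (p / D) * ((1 + p*\<tau>) * 0 + p * 0 - q * 0 + d * 0 - (H1 - H2) - Q 0)) at_top"
    unfolding F_def[abs_def]
    by (intro tendsto_intros e0 r10 r20 r30 Hk0)
  have eq: "F t = y t" if t: "t \<ge> 0" for t
  proof -
    have Q: "Q t = u t - y t + p * integral {t-\<tau>..t} u - q * integral {t-\<tau>..t} y
        + d * integral {t-2*\<tau>..t} y - Hk t"
      unfolding Q_def Gu_def Gy_def
      using G_diff[OF ucont, of \<tau> t] G_diff[OF ycont, of \<tau> t] G_diff[OF ycont, of "2*\<tau>" t] tau t
      by simp
    have pD: "p \<noteq> 0" "D \<noteq> 0" using p D_pos by auto
    have "D * F t = p * ((1 + p*\<tau>) * e t + p * r1 t - q * r2 t + d * r3 t - Hk t - Q t)"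
      unfolding F_def Q_const[OF t, symmetric] using pD by simp
    also have "\<dots> = D * y t"
      unfolding Q e_def r1_def r2_def r3_def D_def using pD qdef by (simp add: field_simps)
    finally show ?thesis using pD by simp
  qed
  have ev: "eventually (\<lambda>t. F t = y t) at_top"
    using eventually_ge_at_top[of 0] by (rule eventually_mono) (use eq in auto)
  have yl: "(y \<longlongrightarrow> - p * ((Q 0 + H1 - H2) / D)) at_top"
    using tendsto_cong[OF ev] F0 by (simp add: field_simps)
  then show "(y \<longlongrightarrow> - p * ((Q 0 + H1 - H2) / D)) at_top" .
  have ue: "u t = e t - (q / p) * y t" for t unfolding e_def using p by (simp add: field_simps)
  have uf: "(\<lambda>t. e t - (q / p) * y t) = u" using ue by auto
  have l1: "((\<lambda>t. e t - (q / p) * y t) \<longlongrightarrow> 0 - (q / p) * (- p * ((Q 0 + H1 - H2) / D))) at_top"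
    by (intro tendsto_intros e0 yl)
  have l2: "0 - (q / p) * (- p * ((Q 0 + H1 - H2) / D)) = q * ((Q 0 + H1 - H2) / D)"
    using p by simp
  show "(u \<longlongrightarrow> q * ((Q 0 + H1 - H2) / D)) at_top" using l1 unfolding uf l2 .
qed

end

lemma closed_lebesgue: "closed S \<Longrightarrow> S \<in> sets lebesgue"
  by (intro sets_completionI_sets) (simp add: borel_closed)

lemma tail_integral:
  fixes h :: "real \<Rightarrow> 'a::euclidean_space"
  assumes hc: "continuous_on {0..} h"
    and hb: "\<And>t. t \<ge> 0 \<Longrightarrow> norm (h t) \<le> K * exp (-\<beta>*t)" and beta: "\<beta> > 0"
  shows "((\<lambda>t. integral {0..t} h) \<longlongrightarrow> integral {0..} h) at_top"
proof -
  have gi: "((\<lambda>x. K * exp (-\<beta>*x)) has_integral K * (exp (-\<beta>*a) / \<beta>)) {a..}" for a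
    using has_integral_mult_right[OF has_integral_exp_minus_to_infinity[OF beta, of a], of K] .
  have intS: "h integrable_on S" if S: "closed S" "S \<subseteq> {0..}" "(\<lambda>x. K * exp (-\<beta>*x)) integrable_on S" for S
  proof (rule measurable_bounded_by_integrable_imp_integrable[OF _ S(3)])
    show "S \<in> sets lebesgue" using S(1) by (rule closed_lebesgue)
    then show "h \<in> borel_measurable (lebesgue_on S)"
      by (intro continuous_imp_measurable_on_sets_lebesgue continuous_on_subset[OF hc S(2)])
    show "norm (h x) \<le> K * exp (-\<beta>*x)" if "x \<in> S" for x using hb that S(2) by auto
  qed
  have tailb: "norm (integral {t..} h) \<le> K * (exp (-\<beta>*t) / \<beta>)" if t: "t \<ge> 0" for t
  proof (rule integral_norm_bound_integral'[OF _ _ _ gi])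
    show "{t..} \<in> sets lebesgue" by (rule closed_lebesgue) simp
    then show "h \<in> borel_measurable (lebesgue_on {t..})"
      by (intro continuous_imp_measurable_on_sets_lebesgue continuous_on_subset[OF hc]) (use t in auto)
    show "norm (h x) \<le> K * exp (-\<beta>*x)" if "x \<in> {t..}" for x using hb that t by auto
  qed
  have split: "integral {0..} h = integral {0..t} h + integral {t..} h" if t: "t \<ge> 0" for t
  proof -
    have i1: "h integrable_on {0..t}"
      by (rule integrable_continuous_real, rule continuous_on_subset[OF hc]) auto
    have i2: "h integrable_on {t..}"
      using t gi[of t] by (intro intS) (auto simp: integrable_on_def)
    have un: "{0..t} \<union> {t..} = {0..}" using t by auto
    have int: "{0..t} \<inter> {t..} = {t}" using t by auto
    show ?thesis using integral_Un[OF i1 i2] unfolding un int by simp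
  qed
  have "((\<lambda>t. integral {0..} h - integral {0..t} h) \<longlongrightarrow> 0) at_top"
  proof (rule Lim_null_comparison)
    show "eventually (\<lambda>t. norm (integral {0..} h - integral {0..t} h) \<le> K * (exp (-\<beta>*t) / \<beta>)) at_top"
      using eventually_ge_at_top[of "0::real"] by (rule eventually_mono) (use split tailb in auto)
    have "((\<lambda>t. exp (-\<beta>*t)) \<longlongrightarrow> 0) at_top" by (rule exp_decay_tendsto[OF beta])
    from tendsto_mult[OF tendsto_const tendsto_divide[OF this tendsto_const, of \<beta>], of K]
    show "((\<lambda>t. K * (exp (-\<beta>*t) / \<beta>)) \<longlongrightarrow> 0) at_top" using beta by simp
  qed
  from tendsto_diff[OF tendsto_const[of "integral {0..} h"] this] show ?thesis by simp
qed


lemma mat2_cases: obtains a b c e where "(M::'a::zero^2^2) = vector [vector [a, b], vector [c, e]]"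
proof -
  have "M = vector [vector [M$1$1, M$1$2], vector [M$2$1, M$2$2]]"
    by (simp add: vec_eq_iff forall_2)
  then show ?thesis using that by blast
qed

lemma inv2_aux:
  fixes a b c e :: "'a::field"
  assumes dl: "a * e - b * c \<noteq> 0"
  shows "(vector [vector [a, b], vector [c, e]] :: 'a^2^2) ** (vector [vector [e / (a * e - b * c), - b / (a * e - b * c)], vector [- c / (a * e - b * c), a / (a * e - b * c)]] :: 'a^2^2) = mat 1"
    and "(vector [vector [e / (a * e - b * c), - b / (a * e - b * c)], vector [- c / (a * e - b * c), a / (a * e - b * c)]] :: 'a^2^2) ** (vector [vector [a, b], vector [c, e]] :: 'a^2^2) = mat 1"
proof -
  have sq: "a*(a*(e*e)) + b*(b*(c*c)) - a*(b*(c*(e*2))) = (a*e-b*c)*(a*e-b*c)"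
    by (simp add: algebra_simps)
  have "(a*e-b*c)*(a*e-b*c) \<noteq> 0" using dl by simp
  then have nz: "a*(a*(e*e)) + b*(b*(c*c)) \<noteq> a*(b*(c*(e*2)))" using sq by auto
  show "(vector [vector [a, b], vector [c, e]] :: 'a^2^2) ** (vector [vector [e / (a * e - b * c), - b / (a * e - b * c)], vector [- c / (a * e - b * c), a / (a * e - b * c)]] :: 'a^2^2) = mat 1"
    using dl nz by (simp add: vec_eq_iff forall_2 matrix_matrix_mult_def mat_def UNIV_2 field_simps)
  show "(vector [vector [e / (a * e - b * c), - b / (a * e - b * c)], vector [- c / (a * e - b * c), a / (a * e - b * c)]] :: 'a^2^2) ** (vector [vector [a, b], vector [c, e]] :: 'a^2^2) = mat 1"
    using dl nz by (simp add: vec_eq_iff forall_2 matrix_matrix_mult_def mat_def UNIV_2 field_simps)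
qed

lemma inv2:
  fixes a b c e :: "'a::field"
  assumes dl: "a * e - b * c \<noteq> 0"
  shows "matrix_inv (vector [vector [a, b], vector [c, e]] :: 'a^2^2) =
     vector [vector [e / (a * e - b * c), - b / (a * e - b * c)], vector [- c / (a * e - b * c), a / (a * e - b * c)]]"
    (is "matrix_inv ?M = ?E")
proof -
  note ME = inv2_aux(1)[OF dl] and EM = inv2_aux(2)[OF dl]
  show ?thesis unfolding matrix_inv_def
  proof (rule some_equality)
    show "?M ** ?E = mat 1 \<and> ?E ** ?M = mat 1" using ME EM by simp
    fix A' assume A': "?M ** A' = mat 1 \<and> A' ** ?M = mat 1"
    have "A' = A' ** (?M ** ?E)" using ME by (simp add: matrix_mul_rid)
    also have "\<dots> = (A' ** ?M) ** ?E" by (simp add: matrix_mul_assoc)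
    also have "\<dots> = ?E" using A' by (simp add: matrix_mul_lid)
    finally show "A' = ?E" .
  qed
qed

lemma tendsto_vector2:
  fixes f1 f2 :: "'b \<Rightarrow> 'a::{topological_space,zero}"
  assumes "(f1 \<longlongrightarrow> a1) F" "(f2 \<longlongrightarrow> a2) F"
  shows "((\<lambda>x. vector [f1 x, f2 x] :: 'a^2) \<longlongrightarrow> vector [a1, a2]) F"
proof (rule vec_tendstoI)
  fix i :: 2
  show "((\<lambda>x. (vector [f1 x, f2 x] :: 'a^2) $ i) \<longlongrightarrow> (vector [a1, a2] :: 'a^2) $ i) F"
    using exhaust_2[of i] assms by auto
qed

lemma M_value:
  fixes p b d q \<tau> :: real and M :: "complex^2^2" and \<Delta> :: "complex \<Rightarrow> complex^2^2"
  assumes p: "p > 0" and b: "b > 0" and qdef: "q = b + d" and tau: "\<tau> > 0" and qpos: "q > 0"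
    and \<Delta>: "\<And>s. \<Delta> s = vector [vector [s + of_real p, exp (- of_real \<tau> * s) * of_real q],
        vector [exp (- of_real \<tau> * s) * of_real p, s + of_real b + exp (- 2 * of_real \<tau> * s) * of_real d]]"
    and lim: "((\<lambda>s. \<chi> i j. s * matrix_inv (\<Delta> s) $ i $ j) \<longlongrightarrow> M) (at 0)"
  shows "M = vector [vector [of_real (q / (p + q + 2*\<tau>*p*b)), - of_real (q / (p + q + 2*\<tau>*p*b))],
      vector [- of_real (p / (p + q + 2*\<tau>*p*b)), of_real (p / (p + q + 2*\<tau>*p*b))]]"
proof -
  define D where "D = p + q + 2*\<tau>*p*b"
  have "2*\<tau>*p*b > 0" using p b tau by simp
  then have Dpos: "D > 0" unfolding D_def using p qpos by linarith
  define f where "f s = (s + of_real p) * (s + of_real b + exp (- 2 * of_real \<tau> * s) * of_real d)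
      - (exp (- of_real \<tau> * s) * of_real q) * (exp (- of_real \<tau> * s) * of_real p)" for s :: complex
  have f0: "f 0 = 0" unfolding f_def qdef by (simp add: algebra_simps)
  have df: "(f has_field_derivative of_real D) (at 0)"
    unfolding f_def[abs_def] D_def
    apply (rule derivative_eq_intros refl)+
    apply (simp add: qdef algebra_simps)
    done
  have r: "((\<lambda>s. f s / s) \<longlongrightarrow> of_real D) (at 0)"
    using df unfolding has_field_derivative_iff by (simp add: f0)
  have "(of_real D :: complex) \<noteq> 0" using Dpos by simp
  from tendsto_imp_eventually_ne[OF r this]
  have ev: "eventually (\<lambda>s. f s \<noteq> 0 \<and> s \<noteq> 0) (at 0)"
    by (rule eventually_mono) auto
  define G where "G s = (vector [vector [(s + of_real b + exp (- 2 * of_real \<tau> * s) * of_real d) / (f s / s),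
        - (exp (- of_real \<tau> * s) * of_real q) / (f s / s)],
      vector [- (exp (- of_real \<tau> * s) * of_real p) / (f s / s), (s + of_real p) / (f s / s)]] :: complex^2^2)" for s
  have FG: "eventually (\<lambda>s. (\<chi> i j. s * matrix_inv (\<Delta> s) $ i $ j) = G s) (at 0)"
    using ev
  proof (rule eventually_mono)
    fix s :: complex assume s: "f s \<noteq> 0 \<and> s \<noteq> 0"
    have inv: "matrix_inv (\<Delta> s) = vector [vector [(s + of_real b + exp (- 2 * of_real \<tau> * s) * of_real d) / f s,
        - (exp (- of_real \<tau> * s) * of_real q) / f s],
      vector [- (exp (- of_real \<tau> * s) * of_real p) / f s, (s + of_real p) / f s]]"
      unfolding \<Delta> f_def using inv2[of "s + of_real p" "s + of_real b + exp (- 2 * of_real \<tau> * s) * of_real d"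
          "exp (- of_real \<tau> * s) * of_real q" "exp (- of_real \<tau> * s) * of_real p"] s
      unfolding f_def by simp
    show "(\<chi> i j. s * matrix_inv (\<Delta> s) $ i $ j) = G s"
      unfolding inv G_def using s by (simp add: vec_eq_iff forall_2 field_simps)
  qed
  have e0: "((\<lambda>s::complex. exp (- of_real \<tau> * s)) \<longlongrightarrow> 1) (at 0)"
    using tendsto_exp[OF tendsto_mult[OF tendsto_const tendsto_ident_at, of "- of_real \<tau>" 0 UNIV]] by simp
  have e2: "((\<lambda>s::complex. exp (- 2 * of_real \<tau> * s)) \<longlongrightarrow> 1) (at 0)"
    using tendsto_exp[OF tendsto_mult[OF tendsto_const tendsto_ident_at, of "- 2 * of_real \<tau>" 0 UNIV]] by simp
  have s0: "((\<lambda>s::complex. s) \<longlongrightarrow> 0) (at 0)" by (rule tendsto_ident_at)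
  have GL: "(G \<longlongrightarrow> vector [vector [of_real (q / D), - of_real (q / D)],
      vector [- of_real (p / D), of_real (p / D)]]) (at 0)"
  proof -
    have Dn: "(of_real D :: complex) \<noteq> 0" using Dpos by simp
    have l11: "((\<lambda>s. (s + of_real b + exp (- 2 * of_real \<tau> * s) * of_real d) / (f s / s)) \<longlongrightarrow>
        (0 + of_real b + 1 * of_real d) / of_real D) (at 0)"
      by (intro tendsto_intros s0 e2 r Dn)
    have l12: "((\<lambda>s. - (exp (- of_real \<tau> * s) * of_real q) / (f s / s)) \<longlongrightarrow>
        - (1 * of_real q) / of_real D) (at 0)"
      by (intro tendsto_intros e0 r Dn)
    have l21: "((\<lambda>s. - (exp (- of_real \<tau> * s) * of_real p) / (f s / s)) \<longlongrightarrow>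
        - (1 * of_real p) / of_real D) (at 0)"
      by (intro tendsto_intros e0 r Dn)
    have l22: "((\<lambda>s. (s + of_real p) / (f s / s)) \<longlongrightarrow> (0 + of_real p) / of_real D) (at 0)"
      by (intro tendsto_intros s0 r Dn)
    have "(G \<longlongrightarrow> vector [vector [(0 + of_real b + 1 * of_real d) / of_real D, - (1 * of_real q) / of_real D],
      vector [- (1 * of_real p) / of_real D, (0 + of_real p) / of_real D]]) (at 0)"
      unfolding G_def[abs_def] by (intro tendsto_vector2 l11 l12 l21 l22)
    moreover have "(0 + of_real b + 1 * of_real d) / of_real D = (of_real (q / D) :: complex)"
      using qdef by simp
    moreover have "complex_of_real b + complex_of_real d = complex_of_real q" using qdef by simp
    ultimately show ?thesis by simp
  qed
  have "((\<lambda>s. \<chi> i j. s * matrix_inv (\<Delta> s) $ i $ j) \<longlongrightarrow> vector [vector [of_real (q / D), - of_real (q / D)],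
      vector [- of_real (p / D), of_real (p / D)]]) (at 0)"
    using tendsto_cong[OF FG] GL by simp
  from tendsto_unique[OF at_neq_bot lim this] show ?thesis unfolding D_def .
qed

lemma init_int:
  fixes \<phi> x :: "real \<Rightarrow> real^2"
  assumes phi_cont: "continuous_on {-2*\<tau>..0} \<phi>"
    and x_init: "\<And>\<theta>. \<theta> \<in> {-2*\<tau>..0} \<Longrightarrow> x \<theta> = \<phi> \<theta>"
    and c: "0 \<le> c" "c \<le> 2*\<tau>"
  shows "integral {-c..0} (\<lambda>s. x s $ i) = integral {0..c} (\<lambda>\<theta>. \<phi> (\<theta> - c)) $ i"
proof -
  have "integral {-c..0} (\<lambda>s. x s $ i) = integral {-c..0} (\<lambda>s. \<phi> s $ i)"
    by (rule integral_cong) (use x_init c in auto)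
  also have "\<dots> = integral {0..c} (\<lambda>\<theta>. \<phi> (\<theta> - c) $ i)"
    using integral_shift_real_ivl[of "-c" "-c" 0 "\<lambda>s. \<phi> s $ i"] by simp
  also have "\<dots> = integral {0..c} (\<lambda>\<theta>. \<phi> (\<theta> - c)) $ i"
  proof (rule integral_component_eq_cart)
    have "continuous_on {0..c} (\<lambda>\<theta>. \<phi> (\<theta> - c))"
      by (rule continuous_on_compose2[OF phi_cont]) (use c in \<open>auto intro!: continuous_intros\<close>)
    then show "(\<lambda>\<theta>. \<phi> (\<theta> - c)) integrable_on {0..c}" by (rule integrable_continuous_real)
  qed
  finally show ?thesis .
qed

lemma x_cont:
  fixes \<phi> x :: "real \<Rightarrow> real^2"
  assumes phi_cont: "continuous_on {-2*\<tau>..0} \<phi>" and tau: "\<tau> > 0"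
    and x_init: "\<And>\<theta>. \<theta> \<in> {-2*\<tau>..0} \<Longrightarrow> x \<theta> = \<phi> \<theta>"
    and x_ode: "\<And>t. t \<ge> 0 \<Longrightarrow> (x has_vector_derivative X t) (at t within {0..})"
  shows "continuous_on {-2*\<tau>..} x"
proof -
  have a: "continuous_on {-2*\<tau>..0} x"
    using continuous_on_cong[of "{-2*\<tau>..0}" "{-2*\<tau>..0}" x \<phi>] x_init phi_cont by simp
  have b: "continuous_on {0..} x"
    unfolding continuous_on_eq_continuous_within
  proof
    fix t :: real assume "t \<in> {0..}"
    then show "continuous (at t within {0..}) x"
      using has_vector_derivative_continuous[OF x_ode[of t]] by auto
  qed
  have "continuous_on ({-2*\<tau>..0} \<union> {0..}) x"
    by (rule continuous_on_closed_Un[OF _ _ a b]) auto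
  moreover have "{-2*\<tau>..0} \<union> {0..} = {-2*\<tau>..}" using tau by auto
  ultimately show ?thesis by simp
qed

lemma comp_deriv:
  fixes x :: "real \<Rightarrow> real^2"
  assumes "(x has_vector_derivative X) (at t within {0..})" "t > 0"
  shows "((\<lambda>s. x s $ i) has_real_derivative X $ i) (at t)"
proof -
  have "(x has_vector_derivative X) (at t within {0<..})"
    by (rule has_vector_derivative_within_subset[OF assms(1)]) auto
  then have "(x has_vector_derivative X) (at t)"
    using has_vector_derivative_within_open[of t "{0<..}"] assms(2) by auto
  from bounded_linear.has_vector_derivative[OF bounded_linear_vec_nth this, of i]
  show ?thesis by (simp add: has_real_derivative_iff_has_vector_derivative)
qed

theorem corollary1:
  fixes c1 c3 r2 r4 \<tau> a1 a2 K1 \<beta> :: real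
    and A B C :: "real^2^2"
    and M :: "complex^2^2"
    and h \<phi> x :: "real \<Rightarrow> real^2"
  assumes c1: "c1 > 0" and c3: "c3 > 0" and r2: "r2 > 0" and r4: "r4 > 0" and tau: "\<tau> > 0"
    and a1: "a1 = 2 * pi * c3 * (2 * c1 / (c1 + c3))"
    and a2: "a2 = 2 * pi * c3 * ((c1 - c3) / (c1 + c3))"
    and A: "A = vector [vector [- a1 * r2, 0], vector [0, - (a1 - a2) * r4]]"
    and B: "B = vector [vector [0, - a1 * r4], vector [- a1 * r2, 0]]"
    and C: "C = vector [vector [0, 0], vector [0, - a2 * r4]]"
    and M: "((\<lambda>s. (\<chi> i j. s * matrix_inv (char_matrix A B C \<tau> s) $ i $ j)) \<longlongrightarrow> M) (at 0)"
    and h_cont: "continuous_on {0..} h"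
    and K1: "K1 > 0" and beta: "\<beta> > 0"
    and h_bound: "\<And>t. t \<ge> 0 \<Longrightarrow> norm (h t) \<le> K1 * exp (- \<beta> * t)"
    and phi_cont: "continuous_on {-2*\<tau>..0} \<phi>"
    and x_init: "\<And>\<theta>. \<theta> \<in> {-2*\<tau>..0} \<Longrightarrow> x \<theta> = \<phi> \<theta>"
    and x_ode: "\<And>t. t \<ge> 0 \<Longrightarrow>
        (x has_vector_derivative
           (A *v x t + B *v x (t - \<tau>) + C *v x (t - 2*\<tau>) + h t)) (at t within {0..})"
  shows "((\<lambda>t. cvec (x t)) \<longlongrightarrow>
           M *v cvec (\<phi> 0 + B *v integral {0..\<tau>} (\<lambda>\<theta>. \<phi> (\<theta> - \<tau>))
                      + C *v integral {0..2*\<tau>} (\<lambda>\<theta>. \<phi> (\<theta> - 2*\<tau>))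
                      + integral {0..} h)) at_top"
proof -
  define p where "p = a1 * r2"
  define b where "b = (a1 - a2) * r4"
  define d where "d = a2 * r4"
  define q where "q = a1 * r4"
  have c13: "c1 + c3 > 0" using c1 c3 by simp
  have a1pos: "a1 > 0" unfolding a1 using c1 c3 c13 by (intro mult_pos_pos divide_pos_pos) auto
  have a12: "a1 - a2 = 2 * pi * c3"
  proof -
    have "2 * c1 / (c1 + c3) - (c1 - c3) / (c1 + c3) = (2 * c1 - (c1 - c3)) / (c1 + c3)"
      by (rule diff_divide_distrib[symmetric])
    also have "2 * c1 - (c1 - c3) = c1 + c3" by simp
    also have "(c1 + c3) / (c1 + c3) = 1" using c13 by simp
    finally have "2 * c1 / (c1 + c3) - (c1 - c3) / (c1 + c3) = 1" .
    then have "2 * pi * c3 * (2 * c1 / (c1 + c3)) - 2 * pi * c3 * ((c1 - c3) / (c1 + c3)) = 2 * pi * c3 * 1"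
      by (simp only: right_diff_distrib[symmetric])
    then show ?thesis unfolding a1 a2 by simp
  qed
  have a2abs: "\<bar>a2\<bar> < a1 - a2"
  proof -
    have fr: "\<bar>c1 - c3\<bar> / (c1 + c3) < 1" using c1 c3 c13 by (simp add: divide_less_eq abs_less_iff)
    have "\<bar>a2\<bar> = 2 * pi * c3 * (\<bar>c1 - c3\<bar> / (c1 + c3))"
      unfolding a2 using c3 c13 by (simp add: abs_mult)
    also have "\<dots> < 2 * pi * c3 * 1" using fr c3 by (intro mult_strict_left_mono) auto
    finally show ?thesis using a12 by simp
  qed
  have p_pos: "p > 0" unfolding p_def using a1pos r2 by simp
  have b_pos: "b > 0" unfolding b_def a12 using c3 r4 by simp
  have dlt: "\<bar>d\<bar> < b"
  proof -
    have "\<bar>a2\<bar> * r4 < (a1 - a2) * r4" using a2abs r4 by (intro mult_strict_right_mono) auto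
    then show ?thesis unfolding d_def b_def using r4 by (simp add: abs_mult)
  qed
  have qeq: "q = b + d" unfolding q_def b_def d_def by (simp add: algebra_simps)
  have xc: "continuous_on {-2*\<tau>..} x"
    by (rule x_cont[OF phi_cont tau x_init x_ode])
  have ucont: "continuous_on {-2*\<tau>..} (\<lambda>t. x t $ 1)" using xc by (rule continuous_on_component)
  have ycont: "continuous_on {-2*\<tau>..} (\<lambda>t. x t $ 2)" using xc by (rule continuous_on_component)
  have k1cont: "continuous_on {0..} (\<lambda>t. h t $ 1)" using h_cont by (rule continuous_on_component)
  have k2cont: "continuous_on {0..} (\<lambda>t. h t $ 2)" using h_cont by (rule continuous_on_component)
  have k1b: "\<And>t. t \<ge> 0 \<Longrightarrow> \<bar>h t $ 1\<bar> \<le> K1 * exp (-\<beta>*t)"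
    using order_trans[OF component_le_norm_cart h_bound] by simp
  have k2b: "\<And>t. t \<ge> 0 \<Longrightarrow> \<bar>h t $ 2\<bar> \<le> K1 * exp (-\<beta>*t)"
    using order_trans[OF component_le_norm_cart h_bound] by simp
  have du: "\<And>t. t > 0 \<Longrightarrow> ((\<lambda>t. x t $ 1) has_real_derivative (-p * x t $ 1 - q * x (t-\<tau>) $ 2 + h t $ 1)) (at t)"
  proof -
    fix t :: real assume t: "t > 0"
    have "(A *v x t + B *v x (t - \<tau>) + C *v x (t - 2*\<tau>) + h t) $ 1 = -p * x t $ 1 - q * x (t-\<tau>) $ 2 + h t $ 1"
      unfolding A B C p_def q_def by (simp add: matrix_vector_mult_def sum_2)
    with comp_deriv[OF x_ode t, of 1] t show "((\<lambda>t. x t $ 1) has_real_derivative (-p * x t $ 1 - q * x (t-\<tau>) $ 2 + h t $ 1)) (at t)"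
      by simp
  qed
  have dy: "\<And>t. t > 0 \<Longrightarrow> ((\<lambda>t. x t $ 2) has_real_derivative (-b * x t $ 2 - p * x (t-\<tau>) $ 1 - d * x (t-2*\<tau>) $ 2 + h t $ 2)) (at t)"
  proof -
    fix t :: real assume t: "t > 0"
    have "(A *v x t + B *v x (t - \<tau>) + C *v x (t - 2*\<tau>) + h t) $ 2 = -b * x t $ 2 - p * x (t-\<tau>) $ 1 - d * x (t-2*\<tau>) $ 2 + h t $ 2"
      unfolding A B C p_def b_def d_def by (simp add: matrix_vector_mult_def sum_2 algebra_simps)
    with comp_deriv[OF x_ode t, of 2] t show "((\<lambda>t. x t $ 2) has_real_derivative (-b * x t $ 2 - p * x (t-\<tau>) $ 1 - d * x (t-2*\<tau>) $ 2 + h t $ 2)) (at t)"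
      by simp
  qed
  have loc: "dde p b d q \<tau> K1 \<beta> (\<lambda>t. x t $ 1) (\<lambda>t. x t $ 2) (\<lambda>t. h t $ 1) (\<lambda>t. h t $ 2)"
    by (rule dde.intro) (fact p_pos b_pos dlt tau beta qeq ucont ycont k1cont k2cont k1b k2b du dy)+
  interpret D: dde p b d q \<tau> K1 \<beta> "\<lambda>t. x t $ 1" "\<lambda>t. x t $ 2" "\<lambda>t. h t $ 1" "\<lambda>t. h t $ 2"
    by (fact loc)
  define I1 where "I1 = integral {0..\<tau>} (\<lambda>\<theta>. \<phi> (\<theta> - \<tau>))"
  define I2 where "I2 = integral {0..2*\<tau>} (\<lambda>\<theta>. \<phi> (\<theta> - 2*\<tau>))"
  define Hv where "Hv = integral {0..} h"
  have hv: "((\<lambda>t. integral {0..t} h) \<longlongrightarrow> Hv) at_top"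
    unfolding Hv_def by (rule tail_integral[OF h_cont h_bound beta])
  have Hcomp: "((\<lambda>t. integral {0..t} (\<lambda>s. h s $ i)) \<longlongrightarrow> Hv $ i) at_top" for i
  proof -
    have "integral {0..t} (\<lambda>s. h s $ i) = integral {0..t} h $ i" for t
      by (rule integral_component_eq_cart, rule integrable_continuous_real,
          rule continuous_on_subset[OF h_cont]) auto
    then show ?thesis using tendsto_vec_nth[OF hv, of i] by simp
  qed
  define \<kappa> where "\<kappa> = (D.Q 0 + Hv $ 1 - Hv $ 2) / D.D"
  have lim2: "((\<lambda>t. x t $ 2) \<longlongrightarrow> - p * \<kappa>) at_top"
    unfolding \<kappa>_def by (rule D.limits(1)[OF Hcomp Hcomp])
  have lim1: "((\<lambda>t. x t $ 1) \<longlongrightarrow> q * \<kappa>) at_top"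
    unfolding \<kappa>_def by (rule D.limits(2)[OF Hcomp Hcomp])
  have Q0: "D.Q 0 = \<phi> 0 $ 1 - \<phi> 0 $ 2 + p * I1 $ 1 - q * I1 $ 2 + d * I2 $ 2"
  proof -
    have g1: "integral {-2*\<tau>..0} (\<lambda>s. x s $ 1) - integral {-2*\<tau>..0 - \<tau>} (\<lambda>s. x s $ 1) = I1 $ 1"
      using D.G_diff[OF ucont, of \<tau> 0] init_int[OF phi_cont x_init, of \<tau> 1] tau unfolding I1_def by simp
    have g2: "integral {-2*\<tau>..0} (\<lambda>s. x s $ 2) - integral {-2*\<tau>..0 - \<tau>} (\<lambda>s. x s $ 2) = I1 $ 2"
      using D.G_diff[OF ycont, of \<tau> 0] init_int[OF phi_cont x_init, of \<tau> 2] tau unfolding I1_def by simp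
    have g3: "integral {-2*\<tau>..0} (\<lambda>s. x s $ 2) - integral {-2*\<tau>..0 - 2*\<tau>} (\<lambda>s. x s $ 2) = I2 $ 2"
      using D.G_diff[OF ycont, of "2*\<tau>" 0] init_int[OF phi_cont x_init, of "2*\<tau>" 2] tau unfolding I2_def by simp
    have x0: "x 0 = \<phi> 0" using x_init tau by simp
    show ?thesis unfolding D.Q_def D.Gu_def D.Gy_def D.Hk_def g1 g2 g3 x0 by simp
  qed
  define W where "W = \<phi> 0 + B *v I1 + C *v I2 + Hv"
  have W1: "W $ 1 = \<phi> 0 $ 1 - q * I1 $ 2 + Hv $ 1"
    unfolding W_def B C q_def by (simp add: matrix_vector_mult_def sum_2)
  have W2: "W $ 2 = \<phi> 0 $ 2 - p * I1 $ 1 - d * I2 $ 2 + Hv $ 2"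
    unfolding W_def B C p_def d_def by (simp add: matrix_vector_mult_def sum_2)
  have Wd: "W $ 1 - W $ 2 = \<kappa> * D.D"
  proof -
    have "\<kappa> * D.D = D.Q 0 + Hv $ 1 - Hv $ 2" unfolding \<kappa>_def using D.D_pos by simp
    then show ?thesis unfolding W1 W2 Q0 by (simp add: algebra_simps)
  qed
  have Delta: "char_matrix A B C \<tau> s = vector [vector [s + of_real p, exp (- of_real \<tau> * s) * of_real q],
        vector [exp (- of_real \<tau> * s) * of_real p, s + of_real b + exp (- 2 * of_real \<tau> * s) * of_real d]]" for s
    unfolding char_matrix_def cmat_def A B C p_def q_def b_def d_def
    by (simp add: vec_eq_iff forall_2 algebra_simps)
  have Mv: "M = vector [vector [of_real (q / (p + q + 2*\<tau>*p*b)), - of_real (q / (p + q + 2*\<tau>*p*b))],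
      vector [- of_real (p / (p + q + 2*\<tau>*p*b)), of_real (p / (p + q + 2*\<tau>*p*b))]]"
    by (rule M_value[OF p_pos b_pos qeq tau D.q_pos Delta M])
  have DD: "D.D = p + q + 2*\<tau>*p*b" by (simp add: D.D_def)
  have Mv1: "(M *v cvec W) $ 1 = of_real (q * \<kappa>)"
  proof -
    have "(M *v cvec W) $ 1 = of_real (q / D.D) * of_real (W $ 1) - of_real (q / D.D) * of_real (W $ 2)"
      unfolding Mv DD[symmetric] by (simp add: matrix_vector_mult_def sum_2 cvec_def)
    also have "\<dots> = of_real (q / D.D * (W $ 1 - W $ 2))" by (simp add: algebra_simps)
    also have "\<dots> = of_real (q * \<kappa>)" unfolding Wd using D.D_pos by simp
    finally show ?thesis .
  qed
  have Mv2: "(M *v cvec W) $ 2 = of_real (- p * \<kappa>)"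
  proof -
    have "(M *v cvec W) $ 2 = - of_real (p / D.D) * of_real (W $ 1) + of_real (p / D.D) * of_real (W $ 2)"
      unfolding Mv DD[symmetric] by (simp add: matrix_vector_mult_def sum_2 cvec_def)
    also have "\<dots> = of_real (- (p / D.D * (W $ 1 - W $ 2)))" by (simp add: algebra_simps)
    also have "\<dots> = of_real (- p * \<kappa>)" unfolding Wd using D.D_pos by simp
    finally show ?thesis .
  qed
  show ?thesis unfolding W_def[symmetric] I1_def[symmetric] I2_def[symmetric] Hv_def[symmetric]
  proof (rule vec_tendstoI)
    fix i :: 2
    have "((\<lambda>t. complex_of_real (x t $ i)) \<longlongrightarrow> (M *v cvec W) $ i) at_top"
      using exhaust_2[of i] tendsto_of_real[OF lim1] tendsto_of_real[OF lim2] Mv1 Mv2 by auto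
    then show "((\<lambda>t. cvec (x t) $ i) \<longlongrightarrow> (M *v cvec W) $ i) at_top"
      by (simp add: cvec_def)
  qed
qed


end
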